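(* Let $P,K:\mathbb{N}_0\to\mathbb{N}_0$ be a scaling such that $\lim_{n\to\infty}n^3\tau(\theta_n)=0$. Then $\lim_{n\to\infty}\mathbb{P}[T_n(\theta_n)>0]=0$.
   Context: Random key graph: for positive integers $K\le P$, $\theta=(K,P)$ and $n\ge3$, let $K_1(\theta),\dots,K_n(\theta)$ be i.i.d. random subsets of $\{1,\dots,P\}$, each uniform over the $K$-element subsets; the random key graph $\mathbb{K}(n;\theta)$ on $\{1,\dots,n\}$ has an edge between distinct $i,j$ iff $K_i(\theta)\cap K_j(\theta)\ne\emptyset$. $T_n(\theta)$ denotes the number of triangles in $\mathbb{K}(n;\theta)$. $\tau(\theta)=K^3/P^2+(K^2/P)^3$. A scaling is a pair of functions $P,K:\mathbb{N}_0\to\mathbb{N}_0$ with $1\le K_n\le P_n$ for all $n$, and $\theta_n=(K_n,P_n)$. *)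

theory Defs
  imports "HOL-Probability.Probability" "HOL-Probability.Product_PMF"
begin

definition key_pmf :: "nat \<Rightarrow> nat \<Rightarrow> nat set pmf" where
  "key_pmf K P = pmf_of_set {S. S \<subseteq> {1..P} \<and> card S = K}"

definition rkg_pmf :: "nat \<Rightarrow> nat \<Rightarrow> nat \<Rightarrow> (nat \<Rightarrow> nat set) pmf" where
  "rkg_pmf n K P = Pi_pmf {1..n} {} (\<lambda>_. key_pmf K P)"

definition rkg_edge :: "(nat \<Rightarrow> nat set) \<Rightarrow> nat \<Rightarrow> nat \<Rightarrow> bool" where
  "rkg_edge ks i j \<longleftrightarrow> i \<noteq> j \<and> ks i \<inter> ks j \<noteq> {}"

definition triangles :: "nat \<Rightarrow> (nat \<Rightarrow> nat set) \<Rightarrow> nat" where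
  "triangles n ks = card {T. T \<subseteq> {1..n} \<and> card T = 3 \<and>
       (\<forall>i\<in>T. \<forall>j\<in>T. i \<noteq> j \<longrightarrow> rkg_edge ks i j)}"

definition tau :: "nat \<Rightarrow> nat \<Rightarrow> real" where
  "tau K P = real K ^ 3 / real P ^ 2 + (real K ^ 2 / real P) ^ 3"

end

theory Submission
  imports Defs
begin

lemma card_supsets:
  assumes "finite A" "F \<subseteq> A" "card F \<le> K"
  shows "card {S. (S \<subseteq> A \<and> card S = K) \<and> F \<subseteq> S} = (card A - card F) choose (K - card F)"
proof -
  have fF: "finite F" using assms finite_subset by blast
  have "bij_betw (\<lambda>S. S - F) {S. (S \<subseteq> A \<and> card S = K) \<and> F \<subseteq> S} {T. T \<subseteq> A - F \<and> card T = K - card F}"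
  proof (rule bij_betw_byWitness[where f'="\<lambda>T. T \<union> F"])
    show "\<forall>a\<in>{S. (S \<subseteq> A \<and> card S = K) \<and> F \<subseteq> S}. a - F \<union> F = a" by blast
    show "\<forall>a'\<in>{T. T \<subseteq> A - F \<and> card T = K - card F}. a' \<union> F - F = a'" by blast
    show "(\<lambda>S. S - F) ` {S. (S \<subseteq> A \<and> card S = K) \<and> F \<subseteq> S} \<subseteq> {T. T \<subseteq> A - F \<and> card T = K - card F}"
    proof safe
      fix S assume "S \<subseteq> A" "F \<subseteq> S" "K = card S"
      then show "card (S - F) = card S - card F"
        using assms(1) fF by (meson card_Diff_subset finite_subset)
    qed auto
    show "(\<lambda>T. T \<union> F) ` {T. T \<subseteq> A - F \<and> card T = K - card F} \<subseteq> {S. (S \<subseteq> A \<and> card S = K) \<and> F \<subseteq> S}"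
    proof (rule image_subsetI)
      fix T assume "T \<in> {T. T \<subseteq> A - F \<and> card T = K - card F}"
      hence T: "T \<subseteq> A - F" "card T = K - card F" by auto
      have "finite T" using T assms(1) finite_subset by blast
      moreover have "T \<inter> F = {}" using T by blast
      ultimately have "card (T \<union> F) = K" using card_Un_disjoint[of T F] fF T assms(3) by simp
      thus "T \<union> F \<in> {S. (S \<subseteq> A \<and> card S = K) \<and> F \<subseteq> S}" using T assms by auto
    qed
  qed
  hence "card {S. (S \<subseteq> A \<and> card S = K) \<and> F \<subseteq> S} = card {T. T \<subseteq> A - F \<and> card T = K - card F}"
    by (rule bij_betw_same_card)
  also have "\<dots> = card (A - F) choose (K - card F)"
    using assms(1) by (simp add: n_subsets)
  also have "card (A - F) = card A - card F" using assms fF by (simp add: card_Diff_subset)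
  finally show ?thesis .
qed

lemma key_prob_eq:
  assumes "1 \<le> K" "K \<le> P"
  shows "measure_pmf.prob (key_pmf K P) B =
     card ({S. S \<subseteq> {1..P} \<and> card S = K} \<inter> B) / real (P choose K)"
proof -
  have ne: "{S. S \<subseteq> {1..P} \<and> card S = K} \<noteq> {}"
    using n_subsets[of "{1..P}" K] assms by (metis card.empty finite_atLeastAtMost card_atLeastAtMost diff_Suc_1 zero_less_binomial_iff not_less0 gr0I)
  have fin: "finite {S. S \<subseteq> {1..P} \<and> card S = K}" by simp
  show ?thesis unfolding key_pmf_def
    using measure_pmf_of_set[OF ne fin] n_subsets[of "{1..P}" K] by simp
qed

lemma key_prob1:
  assumes "1 \<le> K" "K \<le> P"
  shows "measure_pmf.prob (key_pmf K P) {S. a \<in> S} \<le> real K / real P"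
proof (cases "a \<in> {1..P}")
  case True
  have "{S. S \<subseteq> {1..P} \<and> card S = K} \<inter> {S. a \<in> S} = {S. (S \<subseteq> {1..P} \<and> card S = K) \<and> {a} \<subseteq> S}"
    by auto
  hence c: "card ({S. S \<subseteq> {1..P} \<and> card S = K} \<inter> {S. a \<in> S}) = (P - 1) choose (K - 1)"
    using card_supsets[of "{1..P}" "{a}" K] True assms by simp
  have "real K * real (P choose K) = real P * real ((P - 1) choose (K - 1))"
    using times_binomial_minus1_eq[of K P] assms by (metis of_nat_mult less_le_trans zero_less_one)
  moreover have "real (P choose K) > 0" using assms by simp
  moreover have "real P > 0" using assms by simp
  ultimately show ?thesis unfolding key_prob_eq[OF assms] c
    by (simp add: field_simps)
next
  case False
  have "{S. S \<subseteq> {1..P} \<and> card S = K} \<inter> {S. a \<in> S} = {}" using False by auto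
  then show ?thesis unfolding key_prob_eq[OF assms] by simp
qed

lemma key_prob2:
  assumes "1 \<le> K" "K \<le> P" "a \<noteq> c"
  shows "measure_pmf.prob (key_pmf K P) {S. a \<in> S \<and> c \<in> S} \<le> (real K / real P)^2"
proof (cases "a \<in> {1..P} \<and> c \<in> {1..P} \<and> 2 \<le> K")
  case True
  have "{S. S \<subseteq> {1..P} \<and> card S = K} \<inter> {S. a \<in> S \<and> c \<in> S} = {S. (S \<subseteq> {1..P} \<and> card S = K) \<and> {a,c} \<subseteq> S}"
    by auto
  hence c: "card ({S. S \<subseteq> {1..P} \<and> card S = K} \<inter> {S. a \<in> S \<and> c \<in> S}) = (P - 2) choose (K - 2)"
    using card_supsets[of "{1..P}" "{a,c}" K] True assms by (simp add: numeral_2_eq_2)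
  have e1: "K * (P choose K) = P * ((P - 1) choose (K - 1))"
    using times_binomial_minus1_eq[of K P] assms by simp
  have e2: "(K - 1) * ((P - 1) choose (K - 1)) = (P - 1) * ((P - 1 - 1) choose (K - 1 - 1))"
    using times_binomial_minus1_eq[of "K - 1" "P - 1"] True by simp
  have "K * (K - 1) * (P choose K) = P * (P - 1) * ((P - 2) choose (K - 2))"
  proof -
    have "K * (K - 1) * (P choose K) = (K - 1) * (K * (P choose K))" by simp
    also have "\<dots> = P * ((K - 1) * ((P - 1) choose (K - 1)))" using e1 by simp
    also have "\<dots> = P * (P - 1) * ((P - 1 - 1) choose (K - 1 - 1))" using e2 by simp
    finally show ?thesis by (simp add: numeral_2_eq_2 diff_diff_left)
  qed
  hence e: "real K * (real K - 1) * real (P choose K) = real P * (real P - 1) * real ((P - 2) choose (K - 2))"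
  proof -
    have "real (K * (K - 1) * (P choose K)) = real (P * (P - 1) * ((P - 2) choose (K - 2)))"
      using \<open>K * (K - 1) * (P choose K) = _\<close> by simp
    moreover have "real (K - 1) = real K - 1" "real (P - 1) = real P - 1" using True assms by auto
    ultimately show ?thesis by (simp only: of_nat_mult)
  qed
  have pos: "real (P choose K) > 0" "real P > 1" using assms True by auto
  have "real ((P - 2) choose (K - 2)) / real (P choose K) = real K * (real K - 1) / (real P * (real P - 1))"
    using e pos by (simp add: field_simps)
  also have "\<dots> \<le> (real K / real P)^2"
  proof -
    have "(real K - 1) / (real P - 1) \<le> real K / real P"
      using pos assms by (simp add: field_simps)
    hence "real K / real P * ((real K - 1) / (real P - 1)) \<le> real K / real P * (real K / real P)"
      by (intro mult_left_mono) auto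
    thus ?thesis by (simp add: power2_eq_square)
  qed
  finally show ?thesis unfolding key_prob_eq[OF assms(1,2)] c .
next
  case False
  have "{S. S \<subseteq> {1..P} \<and> card S = K} \<inter> {S. a \<in> S \<and> c \<in> S} = {}"
  proof (cases "a \<in> {1..P} \<and> c \<in> {1..P}")
    case True
    then have "K < 2" using False by auto
    have False if "S \<subseteq> {1..P}" "card S = K" "a \<in> S" "c \<in> S" for S
    proof -
      have "card {a, c} \<le> card S" using that by (intro card_mono) (auto intro: finite_subset)
      thus False using \<open>K < 2\<close> that assms(3) by simp
    qed
    then show ?thesis by blast
  next
    case False then show ?thesis by auto
  qed
  then show ?thesis unfolding key_prob_eq[OF assms(1,2)] by simp
qed


lemma rkg_indep3:
  assumes "i \<in> {1..n}" "j \<in> {1..n}" "k \<in> {1..n}" "i \<noteq> j" "i \<noteq> k" "j \<noteq> k"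
  shows "measure_pmf.prob (rkg_pmf n K P) {ks. ks i \<in> Bi \<and> ks j \<in> Bj \<and> ks k \<in> Bk} =
    measure_pmf.prob (key_pmf K P) Bi * measure_pmf.prob (key_pmf K P) Bj * measure_pmf.prob (key_pmf K P) Bk"
proof -
  define B where "B x = (if x = i then Bi else if x = j then Bj else if x = k then Bk else UNIV)" for x
  have "{ks. ks i \<in> Bi \<and> ks j \<in> Bj \<and> ks k \<in> Bk} = Pi {1..n} B"
  proof (intro set_eqI iffI)
    fix ks assume "ks \<in> {ks. ks i \<in> Bi \<and> ks j \<in> Bj \<and> ks k \<in> Bk}"
    thus "ks \<in> Pi {1..n} B" unfolding B_def by (auto simp: Pi_def)
  next
    fix ks assume "ks \<in> Pi {1..n} B"
    hence "ks i \<in> B i" "ks j \<in> B j" "ks k \<in> B k" using assms by (auto simp: Pi_def simp del: atLeastAtMost_iff)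
    thus "ks \<in> {ks. ks i \<in> Bi \<and> ks j \<in> Bj \<and> ks k \<in> Bk}" using assms(4-6) unfolding B_def by simp
  qed
  hence "measure_pmf.prob (rkg_pmf n K P) {ks. ks i \<in> Bi \<and> ks j \<in> Bj \<and> ks k \<in> Bk} =
     (\<Prod>x\<in>{1..n}. measure_pmf.prob (key_pmf K P) (B x))"
    unfolding rkg_pmf_def by (simp add: measure_Pi_pmf_Pi)
  also have "\<dots> = (\<Prod>x\<in>{i,j,k}. measure_pmf.prob (key_pmf K P) (B x))"
    by (rule prod.mono_neutral_right) (use assms in \<open>auto simp: B_def\<close>)
  also have "\<dots> = measure_pmf.prob (key_pmf K P) Bi * measure_pmf.prob (key_pmf K P) Bj * measure_pmf.prob (key_pmf K P) Bk"
    using assms by (simp add: B_def)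
  finally show ?thesis .
qed

lemma tri_bound:
  assumes "i \<in> {1..n}" "j \<in> {1..n}" "k \<in> {1..n}" "i \<noteq> j" "i \<noteq> k" "j \<noteq> k"
    and KP: "1 \<le> K" "K \<le> P"
  shows "measure_pmf.prob (rkg_pmf n K P) {ks. ks i \<inter> ks j \<noteq> {} \<and> ks i \<inter> ks k \<noteq> {} \<and> ks j \<inter> ks k \<noteq> {}} \<le> tau K P"
proof -
  define M where "M = rkg_pmf n K P"
  define E where "E = {ks::nat\<Rightarrow>nat set. ks i \<inter> ks j \<noteq> {} \<and> ks i \<inter> ks k \<noteq> {} \<and> ks j \<inter> ks k \<noteq> {}}"
  define E1 where "E1 a = {ks::nat\<Rightarrow>nat set. ks i \<in> {S. a \<in> S} \<and> ks j \<in> {S. a \<in> S} \<and> ks k \<in> {S. a \<in> S}}" for a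
  define E2 where "E2 t = (case t of (a,b,c) \<Rightarrow> {ks::nat\<Rightarrow>nat set. ks i \<in> {S. a \<in> S \<and> c \<in> S} \<and> ks j \<in> {S. a \<in> S \<and> b \<in> S} \<and> ks k \<in> {S. b \<in> S \<and> c \<in> S}})" for t
  define D where "D = {(a,b,c). a \<in> {1..P} \<and> b \<in> {1..P} \<and> c \<in> {1..P} \<and> a \<noteq> b \<and> a \<noteq> c \<and> b \<noteq> c}"
  have finD: "finite D" 
    by (rule finite_subset[of _ "{1..P} \<times> {1..P} \<times> {1..P}"]) (auto simp: D_def)
  have cardD: "card D \<le> P^3"
  proof -
    have "card D \<le> card ({1..P} \<times> {1..P} \<times> {1..P})"
      by (rule card_mono) (auto simp: D_def)
    thus ?thesis by (simp add: card_cartesian_product power3_eq_cube)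
  qed
  have supp: "set_pmf M \<subseteq> {ks. \<forall>x\<in>{1..n}. ks x \<subseteq> {1..P}}"
  proof
    fix ks assume "ks \<in> set_pmf M"
    hence "ks \<in> PiE_dflt {1..n} {} (set_pmf \<circ> (\<lambda>_. key_pmf K P))"
      unfolding M_def rkg_pmf_def using set_Pi_pmf_subset'[of "{1..n}" "{}" "\<lambda>_. key_pmf K P"] by auto
    moreover have "set_pmf (key_pmf K P) = {S. S \<subseteq> {1..P} \<and> card S = K}"
    proof -
      have "{S. S \<subseteq> {1..P} \<and> card S = K} \<noteq> {}"
      proof -
        have "card {S. S \<subseteq> {1..P} \<and> card S = K} > 0" using KP by (simp add: n_subsets)
        thus ?thesis by (metis card.empty less_irrefl)
      qed
      thus ?thesis unfolding key_pmf_def by (simp add: set_pmf_of_set)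
    qed
    ultimately show "ks \<in> {ks. \<forall>x\<in>{1..n}. ks x \<subseteq> {1..P}}" by (auto simp: PiE_dflt_def)
  qed
  have sub: "E \<inter> set_pmf M \<subseteq> (\<Union>a\<in>{1..P}. E1 a) \<union> (\<Union>t\<in>D. E2 t)"
  proof
    fix ks assume ks: "ks \<in> E \<inter> set_pmf M"
    hence "ks \<in> {ks. \<forall>x\<in>{1..n}. ks x \<subseteq> {1..P}}" using supp by blast
    hence ran: "ks i \<subseteq> {1..P}" "ks j \<subseteq> {1..P}" "ks k \<subseteq> {1..P}" using assms(1-3) by blast+
    from ks obtain a b c where abc: "a \<in> ks i" "a \<in> ks j" "b \<in> ks j" "b \<in> ks k" "c \<in> ks i" "c \<in> ks k"
      unfolding E_def by blast
    show "ks \<in> (\<Union>a\<in>{1..P}. E1 a) \<union> (\<Union>t\<in>D. E2 t)"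
    proof (cases "a = b \<or> a = c \<or> b = c")
      case True
      then obtain x where "x \<in> ks i" "x \<in> ks j" "x \<in> ks k" using abc by blast
      hence "ks \<in> E1 x" "x \<in> {1..P}" using ran unfolding E1_def by auto
      thus ?thesis by blast
    next
      case False
      hence "(a,b,c) \<in> D" using abc ran unfolding D_def by auto
      moreover have "ks \<in> E2 (a,b,c)" using abc unfolding E2_def by auto
      ultimately show ?thesis by blast
    qed
  qed
  have "measure_pmf.prob M E = measure_pmf.prob M (E \<inter> set_pmf M)"
    by (simp add: measure_Int_set_pmf)
  also have "\<dots> \<le> measure_pmf.prob M ((\<Union>a\<in>{1..P}. E1 a) \<union> (\<Union>t\<in>D. E2 t))"
    by (rule measure_pmf.finite_measure_mono[OF sub]) simp
  also have "\<dots> \<le> measure_pmf.prob M (\<Union>a\<in>{1..P}. E1 a) + measure_pmf.prob M (\<Union>t\<in>D. E2 t)"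
    by (rule measure_Un_le) simp_all
  also have "\<dots> \<le> (\<Sum>a\<in>{1..P}. measure_pmf.prob M (E1 a)) + (\<Sum>t\<in>D. measure_pmf.prob M (E2 t))"
    by (intro add_mono measure_pmf.finite_measure_subadditive_finite) (simp_all add: finD)
  also have "\<dots> \<le> (\<Sum>a\<in>{1..P}. (real K / real P)^3) + (\<Sum>t\<in>D. ((real K / real P)^2)^3)"
  proof (intro add_mono sum_mono)
    fix a :: nat
    have "measure_pmf.prob M (E1 a) = measure_pmf.prob (key_pmf K P) {S. a \<in> S} ^ 3"
      unfolding E1_def M_def rkg_indep3[OF assms(1-6)] by (simp add: power3_eq_cube)
    also have "\<dots> \<le> (real K / real P)^3"
      by (intro power_mono key_prob1 KP) simp
    finally show "measure_pmf.prob M (E1 a) \<le> (real K / real P)^3" .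
  next
    fix t assume "t \<in> D"
    then obtain a b c where t: "t = (a,b,c)" "a \<noteq> b" "a \<noteq> c" "b \<noteq> c" unfolding D_def by auto
    have "measure_pmf.prob M (E2 t) = measure_pmf.prob (key_pmf K P) {S. a \<in> S \<and> c \<in> S} *
       measure_pmf.prob (key_pmf K P) {S. a \<in> S \<and> b \<in> S} * measure_pmf.prob (key_pmf K P) {S. b \<in> S \<and> c \<in> S}"
      by (simp only: E2_def M_def t prod.case rkg_indep3[OF assms(1-6)])
    also have "\<dots> \<le> (real K / real P)^2 * (real K / real P)^2 * (real K / real P)^2"
      by (intro mult_mono key_prob2 KP t) simp_all
    finally show "measure_pmf.prob M (E2 t) \<le> ((real K / real P)^2)^3" by (simp add: power3_eq_cube)
  qed
  also have "\<dots> \<le> real P * (real K / real P)^3 + real (P^3) * ((real K / real P)^2)^3"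
    using cardD by (intro add_mono) (auto intro!: mult_right_mono)
  also have "\<dots> = tau K P"
    using KP unfolding tau_def by (simp add: field_simps power3_eq_cube power2_eq_square)
  finally show ?thesis unfolding M_def E_def .
qed

theorem theorem1:
  fixes P K :: "nat \<Rightarrow> nat"
  assumes scaling: "\<And>n. 1 \<le> K n \<and> K n \<le> P n"
    and lim: "(\<lambda>n. real n ^ 3 * tau (K n) (P n)) \<longlonglongrightarrow> 0"
  shows "(\<lambda>n. measure_pmf.prob (rkg_pmf n (K n) (P n)) {ks. triangles n ks > 0}) \<longlonglongrightarrow> 0"
proof (rule tendsto_sandwich[OF _ _ tendsto_const lim])
  show "\<forall>\<^sub>F n in sequentially. 0 \<le> measure_pmf.prob (rkg_pmf n (K n) (P n)) {ks. triangles n ks > 0}"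
    by simp
  show "\<forall>\<^sub>F n in sequentially. measure_pmf.prob (rkg_pmf n (K n) (P n)) {ks. triangles n ks > 0} \<le> real n ^ 3 * tau (K n) (P n)"
  proof (rule always_eventually, rule allI)
    fix n
    define M where "M = rkg_pmf n (K n) (P n)"
    define Tr where "Tr = {(i,j,k). i \<in> {1..n} \<and> j \<in> {1..n} \<and> k \<in> {1..n} \<and> i \<noteq> j \<and> i \<noteq> k \<and> j \<noteq> k}"
    define Et where "Et t = (case t of (i,j,k) \<Rightarrow> {ks::nat\<Rightarrow>nat set. ks i \<inter> ks j \<noteq> {} \<and> ks i \<inter> ks k \<noteq> {} \<and> ks j \<inter> ks k \<noteq> {}})" for t
    have finT: "finite Tr"
      by (rule finite_subset[of _ "{1..n} \<times> {1..n} \<times> {1..n}"]) (auto simp: Tr_def)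
    have cardT: "card Tr \<le> n^3"
    proof -
      have "card Tr \<le> card ({1..n} \<times> {1..n} \<times> {1..n})"
        by (rule card_mono) (auto simp: Tr_def)
      thus ?thesis by (simp add: card_cartesian_product power3_eq_cube)
    qed
    have sub: "{ks. triangles n ks > 0} \<subseteq> (\<Union>t\<in>Tr. Et t)"
    proof
      fix ks assume "ks \<in> {ks. triangles n ks > 0}"
      hence "{T. T \<subseteq> {1..n} \<and> card T = 3 \<and> (\<forall>i\<in>T. \<forall>j\<in>T. i \<noteq> j \<longrightarrow> rkg_edge ks i j)} \<noteq> {}"
        unfolding triangles_def by (metis (no_types, lifting) card.empty less_irrefl mem_Collect_eq)
      then obtain T where T: "T \<subseteq> {1..n}" "card T = 3" "\<forall>i\<in>T. \<forall>j\<in>T. i \<noteq> j \<longrightarrow> rkg_edge ks i j"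
        by blast
      then obtain x y z where xyz: "T = {x,y,z}" "x \<noteq> y" "y \<noteq> z" "x \<noteq> z"
        by (auto simp: card_3_iff)
      have "(x,y,z) \<in> Tr" using T xyz unfolding Tr_def by auto
      moreover have "ks \<in> Et (x,y,z)" using T xyz unfolding Et_def rkg_edge_def by auto
      ultimately show "ks \<in> (\<Union>t\<in>Tr. Et t)" by blast
    qed
    have "measure_pmf.prob M {ks. triangles n ks > 0} \<le> measure_pmf.prob M (\<Union>t\<in>Tr. Et t)"
      by (rule measure_pmf.finite_measure_mono[OF sub]) simp
    also have "\<dots> \<le> (\<Sum>t\<in>Tr. measure_pmf.prob M (Et t))"
      by (rule measure_pmf.finite_measure_subadditive_finite) (simp_all add: finT)
    also have "\<dots> \<le> (\<Sum>t\<in>Tr. tau (K n) (P n))"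
    proof (rule sum_mono)
      fix t assume "t \<in> Tr"
      then obtain i j k where t: "t = (i,j,k)" "i \<in> {1..n}" "j \<in> {1..n}" "k \<in> {1..n}" "i \<noteq> j" "i \<noteq> k" "j \<noteq> k"
        unfolding Tr_def by auto
      show "measure_pmf.prob M (Et t) \<le> tau (K n) (P n)"
        unfolding M_def Et_def t(1) using tri_bound[OF t(2-7)] scaling[of n] by simp
    qed
    also have "\<dots> = real (card Tr) * tau (K n) (P n)" by simp
    also have "\<dots> \<le> real n ^ 3 * tau (K n) (P n)"
    proof (rule mult_right_mono)
      show "real (card Tr) \<le> real n ^ 3" using cardT by (metis of_nat_le_iff of_nat_power)
      show "0 \<le> tau (K n) (P n)" unfolding tau_def by simp
    qed
    finally show "measure_pmf.prob (rkg_pmf n (K n) (P n)) {ks. triangles n ks > 0} \<le> real n ^ 3 * tau (K n) (P n)"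
      unfolding M_def .
  qed
qed

end
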